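(* Assume (A1)–(A4) and the latent index model (LI) below. Then $h_\ell(u)\ge0$ for all $\ell=1,\dots,L$ and all $u\in[0,1]$.
   Context: Observe i.i.d. $(Y_i,D_i,\mathbf Z_i)$, $D_i\in\{0,1\}$, $\mathbf Z_i=(Z_{1i},\dots,Z_{Li})'\in\{0,1\}^L$, $L\ge2$; potential outcomes $Y_i(0),Y_i(1)$ and compliance type $D_i(\cdot):\{0,1\}^L\to\{0,1\}$ with $D_i=D_i(\mathbf Z_i)$. $p_\ell=P(Z_{\ell i}=1)$, $\pi_\ell=\mathbb E[D_i\mid Z_{\ell i}=1]-\mathbb E[D_i\mid Z_{\ell i}=0]$, $\Sigma_Z=\mathrm{Var}(\mathbf Z_i)$; $Z_{-\ell}$ is the vector of instruments other than $Z_\ell$. (LI): $D_i=\mathbf 1\{V(\mathbf Z_i)\ge U_i\}$ with $V$ measurable and $U_i\sim\mathrm{Uniform}(0,1)$ conditional on potential outcomes; $p(z)=P(D_i=1\mid\mathbf Z_i=z)=V(z)$ and $$h_\ell(u)=\frac{P(p(\mathbf Z_i)\ge u\mid Z_{\ell i}=1)-P(p(\mathbf Z_i)\ge u\mid Z_{\ell i}=0)}{\mathbb E[p(\mathbf Z_i)\mid Z_{\ell i}=1]-\mathbb E[p(\mathbf Z_i)\mid Z_{\ell i}=0]}.$$ Assumptions: (A1) $(Y_i(0),Y_i(1),D_i(\cdot))$ independent of $\mathbf Z_i$. (A2) $D_i(z)$ nondecreasing in each coordinate for every $i$. (A3) $p_\ell>0$, $\pi_\ell>0$ for all $\ell$;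 $\Sigma_Z$ positive definite. (A4) For each $\ell$, $\mathbb E[f(Z_{-\ell})\mid Z_\ell=1]\ge\mathbb E[f(Z_{-\ell})\mid Z_\ell=0]$ for every nondecreasing $f:\{0,1\}^{L-1}\to\mathbb R$. *)

theory Defs
  imports "HOL-Probability.Probability"
begin

text \<open>Conditioning on an event B of positive probability (Z is discrete, so all
conditioning events in the statement are of this form).\<close>

definition cond_prob :: "'a measure \<Rightarrow> 'a set \<Rightarrow> 'a set \<Rightarrow> real" where
  "cond_prob M A B = measure M (A \<inter> B) / measure M B"

definition cond_expect :: "'a measure \<Rightarrow> ('a \<Rightarrow> real) \<Rightarrow> 'a set \<Rightarrow> real" where
  "cond_expect M X B = (\<integral>\<omega>. X \<omega> * indicator B \<omega> \<partial>M) / measure M B"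

text \<open>Independence of two random variables with possibly different codomains
(the library's indep_var requires equal codomain types).\<close>
definition indep_rv :: "'a measure \<Rightarrow> 'b measure \<Rightarrow> ('a \<Rightarrow> 'b) \<Rightarrow> 'c measure \<Rightarrow> ('a \<Rightarrow> 'c) \<Rightarrow> bool" where
  "indep_rv M Ma X Mb Y \<longleftrightarrow>
     X \<in> measurable M Ma \<and> Y \<in> measurable M Mb \<and>
     (\<forall>A\<in>sets Ma. \<forall>B\<in>sets Mb.
        measure M (X -` A \<inter> Y -` B \<inter> space M) = measure M (X -` A \<inter> space M) * measure M (Y -` B \<inter> space M))"

definition treat :: "('a \<Rightarrow> ('l \<Rightarrow> bool) \<Rightarrow> bool) \<Rightarrow> ('a \<Rightarrow> 'l \<Rightarrow> bool) \<Rightarrow> 'a \<Rightarrow> real" where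
  "treat Dt Z \<omega> = of_bool (Dt \<omega> (Z \<omega>))"

definition inst_prob :: "'a measure \<Rightarrow> ('a \<Rightarrow> 'l \<Rightarrow> bool) \<Rightarrow> 'l \<Rightarrow> real" where
  "inst_prob M Z l = measure M {\<omega> \<in> space M. Z \<omega> l}"

definition first_stage :: "'a measure \<Rightarrow> ('a \<Rightarrow> ('l \<Rightarrow> bool) \<Rightarrow> bool) \<Rightarrow> ('a \<Rightarrow> 'l \<Rightarrow> bool) \<Rightarrow> 'l \<Rightarrow> real" where
  "first_stage M Dt Z l =
     cond_expect M (treat Dt Z) {\<omega> \<in> space M. Z \<omega> l}
   - cond_expect M (treat Dt Z) {\<omega> \<in> space M. \<not> Z \<omega> l}"

definition cov_Z :: "'a measure \<Rightarrow> ('a \<Rightarrow> 'l \<Rightarrow> bool) \<Rightarrow> 'l \<Rightarrow> 'l \<Rightarrow> real" where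
  "cov_Z M Z j k =
     (\<integral>\<omega>. of_bool (Z \<omega> j) * of_bool (Z \<omega> k) \<partial>M)
     - (\<integral>\<omega>. of_bool (Z \<omega> j) \<partial>M) * (\<integral>\<omega>. of_bool (Z \<omega> k) \<partial>M)"

definition pos_def_mat :: "('l::finite \<Rightarrow> 'l \<Rightarrow> real) \<Rightarrow> bool" where
  "pos_def_mat S \<longleftrightarrow> (\<forall>c::'l \<Rightarrow> real. (\<exists>j. c j \<noteq> 0) \<longrightarrow> (\<Sum>j\<in>UNIV. \<Sum>k\<in>UNIV. c j * S j k * c k) > 0)"

definition pscore :: "'a measure \<Rightarrow> ('a \<Rightarrow> ('l \<Rightarrow> bool) \<Rightarrow> bool) \<Rightarrow> ('a \<Rightarrow> 'l \<Rightarrow> bool) \<Rightarrow> ('l \<Rightarrow> bool) \<Rightarrow> real" where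
  "pscore M Dt Z z = cond_prob M {\<omega> \<in> space M. Dt \<omega> (Z \<omega>)} {\<omega> \<in> space M. Z \<omega> = z}"

definition h_weight :: "'a measure \<Rightarrow> ('a \<Rightarrow> ('l \<Rightarrow> bool) \<Rightarrow> bool) \<Rightarrow> ('a \<Rightarrow> 'l \<Rightarrow> bool) \<Rightarrow> 'l \<Rightarrow> real \<Rightarrow> real" where
  "h_weight M Dt Z l u =
     (cond_prob M {\<omega> \<in> space M. pscore M Dt Z (Z \<omega>) \<ge> u} {\<omega> \<in> space M. Z \<omega> l}
      - cond_prob M {\<omega> \<in> space M. pscore M Dt Z (Z \<omega>) \<ge> u} {\<omega> \<in> space M. \<not> Z \<omega> l})
   / (cond_expect M (\<lambda>\<omega>. pscore M Dt Z (Z \<omega>)) {\<omega> \<in> space M. Z \<omega> l}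
      - cond_expect M (\<lambda>\<omega>. pscore M Dt Z (Z \<omega>)) {\<omega> \<in> space M. \<not> Z \<omega> l})"

end

theory Submission imports Defs begin

lemma unif_hit:
  assumes D: "distributed M lborel U (\<lambda>x. indicator {0..1} x)"
    and ab: "0 \<le> a" "a < b" "b \<le> (1::real)"
  shows "\<exists>\<omega>\<in>space M. a < U \<omega> \<and> U \<omega> \<le> b"
proof (rule ccontr)
  assume "\<not> ?thesis"
  then have e: "U -` {a<..b} \<inter> space M = {}" by auto
  have Um: "U \<in> measurable M lborel" using D by (simp add: distributed_def)
  have "emeasure (distr M lborel U) {a<..b} = emeasure M (U -` {a<..b} \<inter> space M)"
    using Um by (simp add: emeasure_distr)
  also have "\<dots> = 0" using e by simp
  finally have z: "emeasure (density lborel (\<lambda>x. indicator {0..1} x)) {a<..b} = 0"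
    using D by (simp add: distributed_def)
  have "emeasure (density lborel (\<lambda>x. indicator {0..1} x)) {a<..b}
      = (\<integral>\<^sup>+ x. indicator {0..1} x * indicator {a<..b} x \<partial>lborel)"
    by (rule emeasure_density) auto
  also have "\<dots> = (\<integral>\<^sup>+ x. indicator {a<..b} x \<partial>lborel)"
    using ab by (intro nn_integral_cong) (auto simp: indicator_def)
  also have "\<dots> = ennreal (b - a)" using ab by simp
  finally show False using z ab by simp
qed

context prob_space
begin

lemma Zset:
  assumes Zm: "Z \<in> measurable M (count_space UNIV)"
  shows "{\<omega>\<in>space M. Q (Z \<omega>)} \<in> sets M"
proof -
  have "{\<omega>\<in>space M. Q (Z \<omega>)} = Z -` {z. Q z} \<inter> space M" by auto
  then show ?thesis using measurable_sets[OF Zm, of "{z. Q z}"] by simp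
qed

lemma key:
  fixes Z :: "'a \<Rightarrow> 'l::finite \<Rightarrow> bool" and h :: "('l \<Rightarrow> bool) \<Rightarrow> real"
  assumes Zm: "Z \<in> measurable M (count_space UNIV)"
  shows "(\<integral>\<omega>. h (Z \<omega>) * indicator {\<omega>\<in>space M. Q (Z \<omega>)} \<omega> \<partial>M)
     = (\<Sum>z\<in>UNIV. (if Q z then h z else 0) * measure M {\<omega>\<in>space M. Z \<omega> = z})"
proof -
  have "(\<integral>\<omega>. h (Z \<omega>) * indicator {\<omega>\<in>space M. Q (Z \<omega>)} \<omega> \<partial>M)
      = (\<integral>\<omega>. (\<Sum>z\<in>UNIV. (if Q z then h z else 0) * indicator {\<omega>\<in>space M. Z \<omega> = z} \<omega>) \<partial>M)"
  proof (rule Bochner_Integration.integral_cong)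
    fix \<omega> assume w: "\<omega> \<in> space M"
    have "(\<Sum>z\<in>UNIV. (if Q z then h z else 0) * indicator {\<omega>\<in>space M. Z \<omega> = z} \<omega>)
        = (\<Sum>z\<in>UNIV. if Z \<omega> = z then (if Q z then h z else 0) else 0)"
      using w by (intro sum.cong) (auto simp: indicator_def)
    also have "\<dots> = (if Q (Z \<omega>) then h (Z \<omega>) else 0)" by simp
    finally show "h (Z \<omega>) * indicator {\<omega>\<in>space M. Q (Z \<omega>)} \<omega>
        = (\<Sum>z\<in>UNIV. (if Q z then h z else 0) * indicator {\<omega>\<in>space M. Z \<omega> = z} \<omega>)"
      using w by (auto simp: indicator_def)
  qed simp
  also have "\<dots> = (\<Sum>z\<in>UNIV. (\<integral>\<omega>. (if Q z then h z else 0) * indicator {\<omega>\<in>space M. Z \<omega> = z} \<omega> \<partial>M))"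
    by (rule Bochner_Integration.integral_sum) (auto intro!: integrable_mult_right integrable_real_indicator Zset[OF Zm] simp: emeasure_eq_measure)
  also have "\<dots> = (\<Sum>z\<in>UNIV. (if Q z then h z else 0) * measure M {\<omega>\<in>space M. Z \<omega> = z})"
  proof (rule sum.cong)
    fix z
    have "{\<omega>\<in>space M. Z \<omega> = z} \<inter> space M = {\<omega>\<in>space M. Z \<omega> = z}" by auto
    then show "(\<integral>\<omega>. (if Q z then h z else 0) * indicator {\<omega>\<in>space M. Z \<omega> = z} \<omega> \<partial>M)
      = (if Q z then h z else 0) * measure M {\<omega>\<in>space M. Z \<omega> = z}"
      by simp
  qed simp
  finally show ?thesis .
qed

lemma ce_sum:
  fixes Z :: "'a \<Rightarrow> 'l::finite \<Rightarrow> bool" and h :: "('l \<Rightarrow> bool) \<Rightarrow> real"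
  assumes Zm: "Z \<in> measurable M (count_space UNIV)"
  shows "cond_expect M (\<lambda>\<omega>. h (Z \<omega>)) {\<omega>\<in>space M. Q (Z \<omega>)}
     = (\<Sum>z\<in>UNIV. (if Q z then h z else 0) * measure M {\<omega>\<in>space M. Z \<omega> = z})
        / measure M {\<omega>\<in>space M. Q (Z \<omega>)}"
  unfolding cond_expect_def using key[OF Zm] by simp

lemma cp_ce:
  fixes Z :: "'a \<Rightarrow> 'l::finite \<Rightarrow> bool"
  assumes Zm: "Z \<in> measurable M (count_space UNIV)"
  shows "cond_prob M {\<omega>\<in>space M. R (Z \<omega>)} {\<omega>\<in>space M. Q (Z \<omega>)}
     = cond_expect M (\<lambda>\<omega>. of_bool (R (Z \<omega>))) {\<omega>\<in>space M. Q (Z \<omega>)}"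
proof -
  have "measure M ({\<omega>\<in>space M. R (Z \<omega>)} \<inter> {\<omega>\<in>space M. Q (Z \<omega>)})
     = (\<integral>\<omega>. indicator {\<omega>\<in>space M. R (Z \<omega>) \<and> Q (Z \<omega>)} \<omega> \<partial>M)"
  proof -
    have "{\<omega>\<in>space M. R (Z \<omega>) \<and> Q (Z \<omega>)} \<inter> space M = {\<omega>\<in>space M. R (Z \<omega>)} \<inter> {\<omega>\<in>space M. Q (Z \<omega>)}"
      by auto
    then show ?thesis by simp
  qed
  also have "\<dots> = (\<integral>\<omega>. of_bool (R (Z \<omega>)) * indicator {\<omega>\<in>space M. Q (Z \<omega>)} \<omega> \<partial>M)"
    by (rule Bochner_Integration.integral_cong) (auto simp: indicator_def)
  finally show ?thesis unfolding cond_prob_def cond_expect_def by simp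
qed

lemma ce_replace:
  fixes Z :: "'a \<Rightarrow> 'l::finite \<Rightarrow> bool" and h g :: "('l \<Rightarrow> bool) \<Rightarrow> real"
  assumes Zm: "Z \<in> measurable M (count_space UNIV)"
    and hg: "\<And>z. measure M {\<omega>\<in>space M. Z \<omega> = z} > 0 \<Longrightarrow> h z = g z"
  shows "cond_expect M (\<lambda>\<omega>. h (Z \<omega>)) {\<omega>\<in>space M. Q (Z \<omega>)}
       = cond_expect M (\<lambda>\<omega>. g (Z \<omega>)) {\<omega>\<in>space M. Q (Z \<omega>)}"
  unfolding ce_sum[OF Zm]
proof -
  have "(\<Sum>z\<in>UNIV. (if Q z then h z else 0) * measure M {\<omega>\<in>space M. Z \<omega> = z})
      = (\<Sum>z\<in>UNIV. (if Q z then g z else 0) * measure M {\<omega>\<in>space M. Z \<omega> = z})"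
  proof (rule sum.cong)
    fix z
    show "(if Q z then h z else 0) * measure M {\<omega>\<in>space M. Z \<omega> = z}
      = (if Q z then g z else 0) * measure M {\<omega>\<in>space M. Z \<omega> = z}"
    proof (cases "measure M {\<omega>\<in>space M. Z \<omega> = z} > 0")
      case False
      then have "measure M {\<omega>\<in>space M. Z \<omega> = z} = 0"
        using measure_nonneg[of M "{\<omega>\<in>space M. Z \<omega> = z}"] by linarith
      then show ?thesis by simp
    qed (use hg[of z] in auto)
  qed simp
  then show "(\<Sum>z\<in>UNIV. (if Q z then h z else 0) * measure M {\<omega>\<in>space M. Z \<omega> = z}) /
    measure M {\<omega>\<in>space M. Q (Z \<omega>)} =
    (\<Sum>z\<in>UNIV. (if Q z then g z else 0) * measure M {\<omega>\<in>space M. Z \<omega> = z}) /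
    measure M {\<omega>\<in>space M. Q (Z \<omega>)}" by simp
qed

lemma ce_mono_step:
  fixes Z :: "'a \<Rightarrow> 'l::finite \<Rightarrow> bool" and g :: "('l \<Rightarrow> bool) \<Rightarrow> real"
  assumes Zm: "Z \<in> measurable M (count_space UNIV)"
    and gm: "mono g"
    and A4: "\<forall>f :: ('l \<Rightarrow> bool) \<Rightarrow> real.
               mono f \<and> (\<forall>z b. f (z(l := b)) = f z) \<longrightarrow>
               cond_expect M (\<lambda>\<omega>. f (Z \<omega>)) {\<omega> \<in> space M. Z \<omega> l}
                 \<ge> cond_expect M (\<lambda>\<omega>. f (Z \<omega>)) {\<omega> \<in> space M. \<not> Z \<omega> l}"
  shows "cond_expect M (\<lambda>\<omega>. g (Z \<omega>)) {\<omega> \<in> space M. Z \<omega> l}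
                 \<ge> cond_expect M (\<lambda>\<omega>. g (Z \<omega>)) {\<omega> \<in> space M. \<not> Z \<omega> l}"
proof -
  define f1 where "f1 z = g (z(l := True))" for z
  define f0 where "f0 z = g (z(l := False))" for z
  have upd_mono: "z(l := b) \<le> z'(l := b)" if "z \<le> z'" for z z' :: "'l \<Rightarrow> bool" and b
    using that by (auto simp: le_fun_def)
  have m1: "mono f1" unfolding f1_def by (rule monoI) (metis gm monoD upd_mono)
  have m0: "mono f0" unfolding f0_def by (rule monoI) (metis gm monoD upd_mono)
  have fu0: "\<And>z::'l\<Rightarrow>bool. \<not> z l \<Longrightarrow> z(l := False) = z" by (auto simp: fun_eq_iff)
  have i1: "\<forall>z b. f1 (z(l := b)) = f1 z" by (simp add: f1_def)
  have i0: "\<forall>z b. f0 (z(l := b)) = f0 z" by (simp add: f0_def)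
  have le10: "f0 z \<le> f1 z" for z
    unfolding f0_def f1_def by (rule monoD[OF gm]) (auto simp: le_fun_def)
  have "cond_expect M (\<lambda>\<omega>. g (Z \<omega>)) {\<omega> \<in> space M. Z \<omega> l}
      = cond_expect M (\<lambda>\<omega>. f1 (Z \<omega>)) {\<omega> \<in> space M. Z \<omega> l}"
    unfolding cond_expect_def
    by (rule arg_cong[where f="\<lambda>x. x / _"], rule Bochner_Integration.integral_cong)
       (auto simp: indicator_def f1_def fun_upd_idem)
  also have "\<dots> \<ge> cond_expect M (\<lambda>\<omega>. f0 (Z \<omega>)) {\<omega> \<in> space M. Z \<omega> l}"
    using ce_sum[OF Zm, of f1 "\<lambda>z. z l"] ce_sum[OF Zm, of f0 "\<lambda>z. z l"]
    by (auto intro!: divide_right_mono sum_mono mult_right_mono le10)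
  finally have a: "cond_expect M (\<lambda>\<omega>. f0 (Z \<omega>)) {\<omega> \<in> space M. Z \<omega> l}
      \<le> cond_expect M (\<lambda>\<omega>. g (Z \<omega>)) {\<omega> \<in> space M. Z \<omega> l}" .
  have b: "cond_expect M (\<lambda>\<omega>. f0 (Z \<omega>)) {\<omega> \<in> space M. \<not> Z \<omega> l}
      \<le> cond_expect M (\<lambda>\<omega>. f0 (Z \<omega>)) {\<omega> \<in> space M. Z \<omega> l}"
    using A4 m0 i0 by blast
  have "cond_expect M (\<lambda>\<omega>. g (Z \<omega>)) {\<omega> \<in> space M. \<not> Z \<omega> l}
      = cond_expect M (\<lambda>\<omega>. f0 (Z \<omega>)) {\<omega> \<in> space M. \<not> Z \<omega> l}"
    unfolding cond_expect_def
    by (rule arg_cong[where f="\<lambda>x. x / _"], rule Bochner_Integration.integral_cong)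
       (auto simp: indicator_def f0_def, metis fu0)
  then show ?thesis using a b by linarith
qed

end

theorem proposition14:
  fixes M :: "'a measure"
    and Z :: "'a \<Rightarrow> 'l::finite \<Rightarrow> bool"
    and Y0 Y1 U :: "'a \<Rightarrow> real"
    and Dt :: "'a \<Rightarrow> ('l \<Rightarrow> bool) \<Rightarrow> bool"
    and V :: "('l \<Rightarrow> bool) \<Rightarrow> real"
  assumes P: "prob_space M"
    and L2: "CARD('l) \<ge> 2"
    \<comment> \<open>(A1) independence of (Y(0), Y(1), D(.)) and Z\<close>
    and A1: "indep_rv M
               (borel \<Otimes>\<^sub>M (borel \<Otimes>\<^sub>M count_space UNIV)) (\<lambda>\<omega>. (Y0 \<omega>, Y1 \<omega>, Dt \<omega>))
               (count_space UNIV) Z"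
    \<comment> \<open>(A2) monotonicity\<close>
    and A2: "\<forall>\<omega>\<in>space M. mono (Dt \<omega>)"
    \<comment> \<open>(A3)\<close>
    and A3p: "\<forall>l. inst_prob M Z l > 0"
    and A3pi: "\<forall>l. first_stage M Dt Z l > 0"
    and A3S: "pos_def_mat (cov_Z M Z)"
    \<comment> \<open>(A4)\<close>
    and A4: "\<forall>l. \<forall>f :: ('l \<Rightarrow> bool) \<Rightarrow> real.
               mono f \<and> (\<forall>z b. f (z(l := b)) = f z) \<longrightarrow>
               cond_expect M (\<lambda>\<omega>. f (Z \<omega>)) {\<omega> \<in> space M. Z \<omega> l}
                 \<ge> cond_expect M (\<lambda>\<omega>. f (Z \<omega>)) {\<omega> \<in> space M. \<not> Z \<omega> l}"
    \<comment> \<open>(LI) latent index model\<close>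
    and LI_V: "V \<in> borel_measurable (count_space UNIV)"
    and LI_D: "\<forall>\<omega>\<in>space M. \<forall>z. Dt \<omega> z = (V z \<ge> U \<omega>)"
    and LI_U: "distributed M lborel U (\<lambda>x. indicator {0..1} x)"
    and LI_indep: "indep_rv M borel U (borel \<Otimes>\<^sub>M borel) (\<lambda>\<omega>. (Y0 \<omega>, Y1 \<omega>))"
    and LI_p: "\<forall>z. measure M {\<omega> \<in> space M. Z \<omega> = z} > 0 \<longrightarrow> pscore M Dt Z z = V z"
  shows "\<forall>l. \<forall>u::real. 0 \<le> u \<and> u \<le> 1 \<longrightarrow> h_weight M Dt Z l u \<ge> 0"
proof (intro allI impI)
  fix l :: 'l and u :: real
  assume "0 \<le> u \<and> u \<le> 1"
  interpret prob_space M by (rule P)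
  have Zm: "Z \<in> measurable M (count_space UNIV)" using A1 by (simp add: indep_rv_def)
  define W where "W z = max 0 (min 1 (V z))" for z
  have Wm: "mono W"
  proof (rule monoI, rule ccontr)
    fix z z' :: "'l \<Rightarrow> bool"
    assume zz: "z \<le> z'" and nl: "\<not> W z \<le> W z'"
    define a where "a = max 0 (V z')"
    define b where "b = min 1 (V z)"
    have ab: "0 \<le> a" "a < b" "b \<le> 1" using nl unfolding a_def b_def W_def by auto
    obtain \<omega> where w: "\<omega> \<in> space M" "a < U \<omega>" "U \<omega> \<le> b"
      using unif_hit[OF LI_U ab] by blast
    have d1: "Dt \<omega> z" using LI_D w unfolding b_def by auto
    have d2: "\<not> Dt \<omega> z'" using LI_D w unfolding a_def by auto
    have "Dt \<omega> z \<le> Dt \<omega> z'" using monoD[OF bspec[OF A2 w(1)] zz] .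
    then show False using d1 d2 by auto
  qed
  have pW: "pscore M Dt Z z = W z" if pos: "measure M {\<omega>\<in>space M. Z \<omega> = z} > 0" for z
  proof -
    have B: "{\<omega>\<in>space M. Z \<omega> = z} \<in> sets M" using Zset[OF Zm, of "\<lambda>x. x = z"] .
    have "measure M ({\<omega> \<in> space M. Dt \<omega> (Z \<omega>)} \<inter> {\<omega>\<in>space M. Z \<omega> = z})
        \<le> measure M {\<omega>\<in>space M. Z \<omega> = z}"
      by (rule finite_measure_mono[OF _ B]) auto
    then have "pscore M Dt Z z \<le> 1" "0 \<le> pscore M Dt Z z"
      using pos unfolding pscore_def cond_prob_def by (auto simp: divide_le_eq_1)
    moreover have "pscore M Dt Z z = V z" using LI_p pos by blast
    ultimately show ?thesis unfolding W_def by auto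
  qed
  have num: "cond_prob M {\<omega> \<in> space M. pscore M Dt Z (Z \<omega>) \<ge> u} {\<omega> \<in> space M. Z \<omega> l}
      - cond_prob M {\<omega> \<in> space M. pscore M Dt Z (Z \<omega>) \<ge> u} {\<omega> \<in> space M. \<not> Z \<omega> l} \<ge> 0"
  proof -
    have gm: "mono (\<lambda>z. of_bool (u \<le> W z) :: real)"
    proof (rule monoI)
      fix z z' :: "'l \<Rightarrow> bool"
      assume "z \<le> z'"
      then have "W z \<le> W z'" by (rule monoD[OF Wm])
      then show "(of_bool (u \<le> W z) :: real) \<le> of_bool (u \<le> W z')" by auto
    qed
    have r: "\<And>z. measure M {\<omega>\<in>space M. Z \<omega> = z} > 0 \<Longrightarrow>
        (of_bool (u \<le> pscore M Dt Z z) :: real) = of_bool (u \<le> W z)" using pW by simp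
    show ?thesis
      using cp_ce[OF Zm, where R="\<lambda>z. u \<le> pscore M Dt Z z" and Q="\<lambda>z. z l"]
        cp_ce[OF Zm, where R="\<lambda>z. u \<le> pscore M Dt Z z" and Q="\<lambda>z. \<not> z l"]
        ce_replace[where Q="\<lambda>z. z l" and h="\<lambda>z. of_bool (u \<le> pscore M Dt Z z)" and g="\<lambda>z. of_bool (u \<le> W z)", OF Zm r] ce_replace[where Q="\<lambda>z. \<not> z l" and h="\<lambda>z. of_bool (u \<le> pscore M Dt Z z)" and g="\<lambda>z. of_bool (u \<le> W z)", OF Zm r]
        ce_mono_step[OF Zm gm spec[OF A4, of l]]
      by linarith
  qed
  have den: "cond_expect M (\<lambda>\<omega>. pscore M Dt Z (Z \<omega>)) {\<omega> \<in> space M. Z \<omega> l}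
      - cond_expect M (\<lambda>\<omega>. pscore M Dt Z (Z \<omega>)) {\<omega> \<in> space M. \<not> Z \<omega> l} \<ge> 0"
    using ce_replace[where Q="\<lambda>z. z l" and h="pscore M Dt Z" and g=W, OF Zm pW] ce_replace[where Q="\<lambda>z. \<not> z l" and h="pscore M Dt Z" and g=W, OF Zm pW]
      ce_mono_step[OF Zm Wm spec[OF A4, of l]]
    by linarith
  show "h_weight M Dt Z l u \<ge> 0"
    unfolding h_weight_def using num den by (rule divide_nonneg_nonneg)
qed

end
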